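(* Let $H\in\mathbb{R}^{n\times n}$ be symmetric positive semi-definite and let $a_1,\dots,a_n\in\mathbb{R}^n$. Define $\Sigma_0=0\in\mathbb{R}^{n\times n}$ and, for $k=1,\dots,n$, $$\Sigma_k=(I-e_ka_k^T)\Sigma_{k-1}(I-a_ke_k^T)+e_ke_k^T,$$ and set $\ell(a_1,\dots,a_n)=\operatorname{tr}(H\Sigma_n)$. Let $H=LDL^T$ with $L$ unit upper triangular and $D$ nonnegative diagonal. Then $\ell$ attains its global minimum over all $(a_1,\dots,a_n)$ when $a_k=Le_k$ (the $k$-th column of $L$) for every $k$, and the minimum value is $\operatorname{tr}(D)$.
   Context: $e_k$ denotes the $k$-th standard basis vector of $\mathbb{R}^n$. A unit upper triangular matrix is an upper triangular matrix with all diagonal entries equal to $1$. *)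

theory Defs
  imports "Jordan_Normal_Form.Matrix"
begin

text \<open>Matrices are n x n JNF matrices; indices are 0-based, so the paper's
  k = 1..n corresponds to k = 0..n-1 here.\<close>

definition mat_trace :: "'a::comm_ring_1 mat \<Rightarrow> 'a" where
  "mat_trace A = (\<Sum>i<dim_row A. A $$ (i, i))"

definition outer_vec :: "'a::comm_ring_1 vec \<Rightarrow> 'a vec \<Rightarrow> 'a mat" where
  "outer_vec u v = mat (dim_vec u) (dim_vec v) (\<lambda>(i, j). u $ i * v $ j)"

definition psd_mat :: "real mat \<Rightarrow> nat \<Rightarrow> bool" where
  "psd_mat H n \<longleftrightarrow> H \<in> carrier_mat n n \<and> H\<^sup>T = H \<and>
     (\<forall>v \<in> carrier_vec n. 0 \<le> v \<bullet> (H *\<^sub>v v))"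

definition unit_upper_triangular :: "real mat \<Rightarrow> nat \<Rightarrow> bool" where
  "unit_upper_triangular L n \<longleftrightarrow> L \<in> carrier_mat n n \<and> upper_triangular L \<and>
     (\<forall>i<n. L $$ (i, i) = 1)"

text \<open>Sigma n a k is the paper's Sigma_k, using a_{j} = a (j-1) and e_j = unit_vec n (j-1).\<close>
primrec Sigma :: "nat \<Rightarrow> (nat \<Rightarrow> real vec) \<Rightarrow> nat \<Rightarrow> real mat" where
  "Sigma n a 0 = 0\<^sub>m n n"
| "Sigma n a (Suc k) =
     (1\<^sub>m n - outer_vec (unit_vec n k) (a k)) * Sigma n a k * (1\<^sub>m n - outer_vec (a k) (unit_vec n k))
     + outer_vec (unit_vec n k) (unit_vec n k)"

definition ell :: "nat \<Rightarrow> real mat \<Rightarrow> (nat \<Rightarrow> real vec) \<Rightarrow> real" where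
  "ell n H a = mat_trace (H * Sigma n a n)"

end

theory Submission imports Defs "Jordan_Normal_Form.Determinant" begin

lemma outer_carrier[simp]: "outer_vec u v \<in> carrier_mat (dim_vec u) (dim_vec v)"
  by (simp add: outer_vec_def)
lemma outer_dims[simp]: "dim_row (outer_vec u v) = dim_vec u" "dim_col (outer_vec u v) = dim_vec v"
  by (simp_all add: outer_vec_def)
lemma outer_index[simp]: "i < dim_vec u \<Longrightarrow> j < dim_vec v \<Longrightarrow> outer_vec u v $$ (i,j) = u$i * v$j"
  by (simp add: outer_vec_def)
lemma outer_transpose: "(outer_vec u v)\<^sup>T = outer_vec v u"
  by (rule eq_matI) auto

lemma delta0: "(\<Sum>l<(n::nat). if l = i then (x l::real) else 0) = (if i < n then x i else 0)"
  by (induction n) auto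
lemma delta1[simp]: "(\<Sum>l<(n::nat). (if l = i then 1 else 0) * (x l::real)) = (if i < n then x i else 0)"
proof - have "(\<Sum>l<n. (if l = i then 1 else 0) * (x l::real)) = (\<Sum>l<n. if l = i then x l else 0)" by (rule sum.cong) auto
  thus ?thesis by (simp add: delta0) qed
lemma delta2[simp]: "(\<Sum>l<(n::nat). (if i = l then 1 else 0) * (x l::real)) = (if i < n then x i else 0)"
proof - have "(\<Sum>l<n. (if i = l then 1 else 0) * (x l::real)) = (\<Sum>l<n. if l = i then x l else 0)" by (rule sum.cong) auto
  thus ?thesis by (simp add: delta0) qed
lemma delta3[simp]: "(\<Sum>l<(n::nat). (x l::real) * (if l = i then 1 else 0)) = (if i < n then x i else 0)"
proof - have "(\<Sum>l<n. (x l::real) * (if l = i then 1 else 0)) = (\<Sum>l<n. if l = i then x l else 0)" by (rule sum.cong) auto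
  thus ?thesis by (simp add: delta0) qed
lemma delta4[simp]: "(\<Sum>l<(n::nat). (x l::real) * (if i = l then 1 else 0)) = (if i < n then x i else 0)"
proof - have "(\<Sum>l<n. (x l::real) * (if i = l then 1 else 0)) = (\<Sum>l<n. if l = i then x l else 0)" by (rule sum.cong) auto
  thus ?thesis by (simp add: delta0) qed

lemma U_mult_index:
  assumes "(M::real mat) \<in> carrier_mat n m" "v \<in> carrier_vec n" "k<n" "i<n" "j<m"
  shows "((1\<^sub>m n - outer_vec (unit_vec n k) v) * M) $$ (i,j) = M $$ (i,j) - (if i = k then (\<Sum>l<n. v $ l * M $$ (l,j)) else 0)"
proof -
  have "((1\<^sub>m n - outer_vec (unit_vec n k) v) * M) $$ (i,j) = (\<Sum>l<n. (if l = i then M $$ (l,j) else 0) - (if i = k then v $ l * M $$ (l,j) else 0))"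
    using assms by (auto simp: scalar_prod_def atLeast0LessThan algebra_simps intro!: sum.cong)
  also have "\<dots> = (\<Sum>l<n. (if l = i then M $$ (l,j) else 0)) - (\<Sum>l<n. (if i = k then v $ l * M $$ (l,j) else 0))"
    by (simp add: sum_subtractf)
  also have "(\<Sum>l<n. (if l = i then M $$ (l,j) else 0)) = M $$ (i,j)"
    using assms by (simp add: sum.delta)
  finally show ?thesis by (auto simp: sum_distrib_left algebra_simps)
qed

lemma E_mult_index:
  assumes "(M::real mat) \<in> carrier_mat n m" "k<n" "i<n" "j<m"
  shows "(outer_vec (unit_vec n k) (unit_vec n k) * M) $$ (i,j) = (if i = k then M $$ (k,j) else 0)"
proof -
  have "(outer_vec (unit_vec n k) (unit_vec n k) * M) $$ (i,j) = (\<Sum>l<n. (if i = k then (if l = k then M $$ (l,j) else 0) else 0))"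
    using assms by (auto simp: scalar_prod_def atLeast0LessThan intro!: sum.cong)
  also have "\<dots> = (if i = k then M $$ (k,j) else 0)"
    using assms by (simp add: sum.delta)
  finally show ?thesis .
qed

lemma mult_E_index:
  assumes "(M::real mat) \<in> carrier_mat m n" "k<n" "i<m" "j<n"
  shows "(M * outer_vec (unit_vec n k) (unit_vec n k)) $$ (i,j) = (if j = k then M $$ (i,k) else 0)"
proof -
  have "(M * outer_vec (unit_vec n k) (unit_vec n k)) $$ (i,j) = (\<Sum>l<n. (if j = k then (if l = k then M $$ (i,l) else 0) else 0))"
    using assms by (auto simp: scalar_prod_def atLeast0LessThan intro!: sum.cong)
  also have "\<dots> = (if j = k then M $$ (i,k) else 0)"
    using assms by (simp add: sum.delta)
  finally show ?thesis .
qed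


primrec Bm :: "nat \<Rightarrow> (nat \<Rightarrow> real vec) \<Rightarrow> nat \<Rightarrow> real mat" where
  "Bm n a 0 = 0\<^sub>m n n"
| "Bm n a (Suc k) = (1\<^sub>m n - outer_vec (unit_vec n k) (a k)) * Bm n a k + outer_vec (unit_vec n k) (unit_vec n k)"

lemma Bm_dims[simp]: "dim_row (Bm n a k) = n" "dim_col (Bm n a k) = n"
  by (induction k) simp_all
lemma Bm_carrier[simp]: "Bm n a k \<in> carrier_mat n n"
  by (rule carrier_matI) simp_all

lemma Bm_struct:
  assumes "k \<le> n" "\<forall>j<k. a j \<in> carrier_vec n"
  shows "(\<forall>i<n. \<forall>j<n. (k \<le> i \<or> i < j) \<longrightarrow> Bm n a k $$ (i,j) = 0) \<and> (\<forall>i<k. Bm n a k $$ (i,i) = 1)"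
  using assms
proof (induction k)
  case 0
  then show ?case by auto
next
  case (Suc k)
  let ?B = "Bm n a k"
  from Suc have IH: "\<forall>i<n. \<forall>j<n. (k \<le> i \<or> i < j) \<longrightarrow> ?B $$ (i,j) = 0" "\<forall>i<k. ?B $$ (i,i) = 1" by auto
  have ak: "a k \<in> carrier_vec n" "k < n" using Suc by auto
  have ent: "Bm n a (Suc k) $$ (i,j) = ?B $$ (i,j) - (if i = k then (\<Sum>l<n. a k $ l * ?B $$ (l,j)) else 0)
     + (if i = k \<and> j = k then 1 else 0)" if "i<n" "j<n" for i j
    using that ak by (simp del: index_mult_mat add: U_mult_index[OF Bm_carrier ak(1) ak(2)])
  have zero: "(\<Sum>l<n. a k $ l * ?B $$ (l,j)) = 0" if "j<n" "k \<le> j" for j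
  proof (rule sum.neutral, intro ballI)
    fix l assume l: "l \<in> {..<n}"
    have "?B $$ (l,j) = 0" using IH(1) that l by (cases "k \<le> l") auto
    thus "a k $ l * ?B $$ (l,j) = 0" by simp
  qed
  show ?case
  proof (intro conjI allI impI)
    fix i j assume ij: "i<n" "j<n" "Suc k \<le> i \<or> i < j"
    have e0: "?B $$ (i,j) = 0" using IH(1) ij by auto
    show "Bm n a (Suc k) $$ (i,j) = 0"
      unfolding ent[OF ij(1) ij(2)]
    proof (cases "i = k")
      case True
      then show "?B $$ (i,j) - (if i = k then (\<Sum>l<n. a k $ l * ?B $$ (l,j)) else 0)
     + (if i = k \<and> j = k then 1 else 0) = 0" using ij e0 zero[OF ij(2)] by auto
    next
      case False
      then show "?B $$ (i,j) - (if i = k then (\<Sum>l<n. a k $ l * ?B $$ (l,j)) else 0)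
     + (if i = k \<and> j = k then 1 else 0) = 0" using e0 by auto
    qed
  next
    fix i assume i: "i < Suc k"
    have inn: "i < n" using i Suc by auto
    show "Bm n a (Suc k) $$ (i,i) = 1"
      unfolding ent[OF inn inn]
    proof (cases "i = k")
      case True
      then show "?B $$ (i,i) - (if i = k then (\<Sum>l<n. a k $ l * ?B $$ (l,i)) else 0)
     + (if i = k \<and> i = k then 1 else 0) = 1" using inn IH(1) zero[OF inn] by auto
    next
      case False
      then show "?B $$ (i,i) - (if i = k then (\<Sum>l<n. a k $ l * ?B $$ (l,i)) else 0)
     + (if i = k \<and> i = k then 1 else 0) = 1" using i IH(2) by auto
    qed
  qed
qed

lemma Sigma_Bm:
  assumes "k \<le> n" "\<forall>j<k. a j \<in> carrier_vec n"
  shows "Sigma n a k = Bm n a k * (Bm n a k)\<^sup>T"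
  using assms
proof (induction k)
  case 0
  then show ?case by (auto intro!: eq_matI simp: scalar_prod_def)
next
  case (Suc k)
  let ?B = "Bm n a k"
  let ?U = "1\<^sub>m n - outer_vec (unit_vec n k) (a k)"
  let ?E = "outer_vec (unit_vec n k) (unit_vec n k) :: real mat"
  have ak: "a k \<in> carrier_vec n" "k < n" using Suc by auto
  have IH: "Sigma n a k = ?B * ?B\<^sup>T" using Suc by auto
  from Bm_struct[of k n a] Suc have st: "\<forall>i<n. \<forall>j<n. (k \<le> i \<or> i < j) \<longrightarrow> ?B $$ (i,j) = 0" by auto
  have oc: "outer_vec (unit_vec n k) (a k) \<in> carrier_mat n n" using outer_carrier[of "unit_vec n k" "a k"] ak by simp
  have Uc: "?U \<in> carrier_mat n n" using ak by auto
  have Ec: "?E \<in> carrier_mat n n" by auto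
  have UT: "?U\<^sup>T = 1\<^sub>m n - outer_vec (a k) (unit_vec n k)"
    using ak oc by (subst transpose_minus[of "1\<^sub>m n" n n]) (auto simp: outer_transpose)
  have ET: "?E\<^sup>T = ?E" by (simp add: outer_transpose)
  have BE: "?B * ?E = 0\<^sub>m n n"
  proof (rule eq_matI)
    fix i j assume "i < dim_row (0\<^sub>m n n :: real mat)" "j < dim_col (0\<^sub>m n n :: real mat)"
    then have ij: "i<n" "j<n" by auto
    have "?B $$ (i,k) = 0" using st ij ak by (cases "k \<le> i") auto
    thus "(?B * ?E) $$ (i,j) = 0\<^sub>m n n $$ (i,j)" using ij ak by (simp del: index_mult_mat add: mult_E_index[OF Bm_carrier])
  qed auto
  have Bc: "?B \<in> carrier_mat n n" by simp
  have BTc: "?B\<^sup>T \<in> carrier_mat n n" by simp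
  have UTc: "?U\<^sup>T \<in> carrier_mat n n" using Uc by simp
  have UBc: "?U * ?B \<in> carrier_mat n n" using mult_carrier_mat[OF Uc Bc] .
  have Yc: "?B\<^sup>T * ?U\<^sup>T \<in> carrier_mat n n" using mult_carrier_mat[OF BTc UTc] .
  have EB: "?E * ?B\<^sup>T = 0\<^sub>m n n"
  proof -
    have "(?B * ?E)\<^sup>T = ?E * ?B\<^sup>T" by (rule transpose_mult[OF Bc Ec, unfolded ET])
    hence "?E * ?B\<^sup>T = (?B * ?E)\<^sup>T" by simp
    thus ?thesis using BE by simp
  qed
  have EE: "?E * ?E = ?E"
  proof (rule eq_matI)
    fix i j assume "i < dim_row ?E" "j < dim_col ?E"
    then have ij: "i<n" "j<n" by auto
    thus "(?E * ?E) $$ (i,j) = ?E $$ (i,j)" unfolding E_mult_index[OF Ec ak(2) ij] using ij ak by simp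
  qed auto
  have tr: "(?U * ?B + ?E)\<^sup>T = ?B\<^sup>T * ?U\<^sup>T + ?E"
    unfolding transpose_add[OF UBc Ec] transpose_mult[OF Uc Bc] ET ..
  have "(?U * ?B + ?E) * (?U * ?B + ?E)\<^sup>T = (?U * ?B + ?E) * (?B\<^sup>T * ?U\<^sup>T + ?E)"
    by (simp only: tr)
  also have "\<dots> = ?U * ?B * (?B\<^sup>T * ?U\<^sup>T + ?E) + ?E * (?B\<^sup>T * ?U\<^sup>T + ?E)"
    by (rule add_mult_distrib_mat[OF UBc Ec add_carrier_mat[OF Ec]])
  also have "\<dots> = (?U * ?B * (?B\<^sup>T * ?U\<^sup>T) + ?U * ?B * ?E) + (?E * (?B\<^sup>T * ?U\<^sup>T) + ?E * ?E)"
    unfolding mult_add_distrib_mat[OF UBc Yc Ec] mult_add_distrib_mat[OF Ec Yc Ec] ..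
  also have "?U * ?B * ?E = 0\<^sub>m n n" unfolding assoc_mult_mat[OF Uc Bc Ec] BE by (rule right_mult_zero_mat[OF Uc])
  also have "?E * (?B\<^sup>T * ?U\<^sup>T) = 0\<^sub>m n n"
  proof -
    have "?E * (?B\<^sup>T * ?U\<^sup>T) = (?E * ?B\<^sup>T) * ?U\<^sup>T" using assoc_mult_mat[OF Ec BTc UTc] by simp
    thus ?thesis using EB left_mult_zero_mat[OF UTc] by simp
  qed
  also have "?U * ?B * (?B\<^sup>T * ?U\<^sup>T) = ?U * (?B * ?B\<^sup>T) * ?U\<^sup>T"
    using assoc_mult_mat[OF Uc Bc Yc] assoc_mult_mat[OF Bc BTc UTc] assoc_mult_mat[OF Uc mult_carrier_mat[OF Bc BTc] UTc] by simp
  finally have fin: "Bm n a (Suc k) * (Bm n a (Suc k))\<^sup>T = ?U * (?B * ?B\<^sup>T) * ?U\<^sup>T + ?E"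
    using EE right_add_zero_mat[OF mult_carrier_mat[OF mult_carrier_mat[OF Uc mult_carrier_mat[OF Bc BTc]] UTc]]
      left_add_zero_mat[OF Ec] by simp
  show ?case unfolding fin Sigma.simps IH UT ..
qed


lemma Bm_LT:
  assumes uut: "unit_upper_triangular L n" and "k \<le> n"
  shows "Bm n (col L) k * L\<^sup>T = mat n n (\<lambda>(i,j). if i = j \<and> i < k then 1 else 0)"
  using assms(2)
proof (induction k)
  have LTc: "L\<^sup>T \<in> carrier_mat n n" using uut unfolding unit_upper_triangular_def by auto
  case 0
  show ?case by (rule eq_matI) (use LTc in auto)
next
  case (Suc k)
  have Lc: "L \<in> carrier_mat n n" and up: "upper_triangular L" and dg: "\<forall>i<n. L $$ (i,i) = 1"
    using uut unfolding unit_upper_triangular_def by auto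
  have LTc: "L\<^sup>T \<in> carrier_mat n n" using Lc by auto
  let ?a = "col L k"
  let ?B = "Bm n (col L) k"
  let ?U = "1\<^sub>m n - outer_vec (unit_vec n k) ?a"
  let ?E = "outer_vec (unit_vec n k) (unit_vec n k) :: real mat"
  let ?G = "mat n n (\<lambda>(i,j). if i = j \<and> i < k then 1 else 0) :: real mat"
  have kn: "k < n" using Suc by auto
  have ak: "?a \<in> carrier_vec n" using Lc by auto
  have oc: "outer_vec (unit_vec n k) ?a \<in> carrier_mat n n" using outer_carrier[of "unit_vec n k" ?a] Lc by simp
  have Uc: "?U \<in> carrier_mat n n" using minus_carrier_mat[OF oc] .
  have Ec: "?E \<in> carrier_mat n n" by auto
  have Bc: "?B \<in> carrier_mat n n" by simp
  have Gc: "?G \<in> carrier_mat n n" by simp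
  have IH: "?B * L\<^sup>T = ?G" using Suc by auto
  have "Bm n (col L) (Suc k) * L\<^sup>T = (?U * ?B + ?E) * L\<^sup>T" by simp
  also have "\<dots> = ?U * ?B * L\<^sup>T + ?E * L\<^sup>T"
    by (rule add_mult_distrib_mat[OF mult_carrier_mat[OF Uc Bc] Ec LTc])
  also have "?U * ?B * L\<^sup>T = ?U * ?G" using assoc_mult_mat[OF Uc Bc LTc] IH by simp
  finally have eq1: "Bm n (col L) (Suc k) * L\<^sup>T = ?U * ?G + ?E * L\<^sup>T" .
  have sm: "(\<Sum>l<n. ?a $ l * ?G $$ (l,j)) = (if j < k then L $$ (j,k) else 0)" if j: "j < n" for j
  proof -
    have "(\<Sum>l<n. ?a $ l * ?G $$ (l,j)) = (\<Sum>l<n. if l = j then (if j < k then L $$ (j,k) else 0) else 0)"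
      by (rule sum.cong) (use Lc j kn in auto)
    also have "\<dots> = (if j < k then L $$ (j,k) else 0)" using j by (simp add: delta0)
    finally show ?thesis .
  qed
  show ?case unfolding eq1
  proof (rule eq_matI)
    fix i j assume "i < dim_row (mat n n (\<lambda>(i,j). if i = j \<and> i < Suc k then 1 else 0) :: real mat)"
      "j < dim_col (mat n n (\<lambda>(i,j). if i = j \<and> i < Suc k then 1 else 0) :: real mat)"
    then have ij: "i < n" "j < n" by auto
    have "(?U * ?G + ?E * L\<^sup>T) $$ (i,j) = (?U * ?G) $$ (i,j) + (?E * L\<^sup>T) $$ (i,j)"
      using ij Uc Ec LTc by simp
    also have "\<dots> = ?G $$ (i,j) - (if i = k then (if j < k then L $$ (j,k) else 0) else 0)
       + (if i = k then L $$ (j,k) else 0)"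
      unfolding U_mult_index[OF Gc ak kn ij] E_mult_index[OF LTc kn ij] sm[OF ij(2)]
      using ij kn Lc by simp
    also have "\<dots> = mat n n (\<lambda>(i,j). if i = j \<and> i < Suc k then 1 else 0) $$ (i,j)"
    proof (cases "i = k")
      case True
      have "k < j \<Longrightarrow> L $$ (j,k) = 0" using up ij Lc by (auto intro: upper_triangularD)
      then show ?thesis using True ij dg by auto
    next
      case False
      then show ?thesis using ij by auto
    qed
    finally show "(?U * ?G + ?E * L\<^sup>T) $$ (i,j) = mat n n (\<lambda>(i,j). if i = j \<and> i < Suc k then 1 else 0) $$ (i,j)" .
  qed (use Uc Ec LTc in auto)
qed


lemma trace_mult_expand:
  assumes "(A::real mat) \<in> carrier_mat n m" "B \<in> carrier_mat m n"
  shows "mat_trace (A * B) = (\<Sum>i<n. \<Sum>l<m. A $$ (i,l) * B $$ (l,i))"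
  unfolding mat_trace_def using assms by (auto simp: scalar_prod_def atLeast0LessThan intro!: sum.cong)

lemma trace_comm:
  assumes "(A::real mat) \<in> carrier_mat n m" "B \<in> carrier_mat m n"
  shows "mat_trace (A * B) = mat_trace (B * A)"
  unfolding trace_mult_expand[OF assms] trace_mult_expand[OF assms(2,1)]
  by (subst sum.swap) (simp add: mult.commute)

lemma quad_entry:
  assumes D: "(D::real mat) \<in> carrier_mat n n" "diagonal_mat D" and P: "P \<in> carrier_mat n n" and j: "j < n"
  shows "(P\<^sup>T * (D * P)) $$ (j,j) = (\<Sum>l<n. D $$ (l,l) * (P $$ (l,j))^2)"
proof -
  have DP: "(D * P) $$ (l,j) = D $$ (l,l) * P $$ (l,j)" if l: "l < n" for l
  proof -
    have "(D * P) $$ (l,j) = (\<Sum>m<n. D $$ (l,m) * P $$ (m,j))"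
      using D P l j by (simp add: scalar_prod_def atLeast0LessThan)
    also have "\<dots> = (\<Sum>m<n. if m = l then D $$ (l,l) * P $$ (m,j) else 0)"
      by (rule sum.cong) (use D l in \<open>auto simp: diagonal_mat_def\<close>)
    also have "\<dots> = D $$ (l,l) * P $$ (l,j)" using l by (simp add: delta0)
    finally show ?thesis .
  qed
  have "(P\<^sup>T * (D * P)) $$ (j,j) = (\<Sum>l<n. P $$ (l,j) * (D * P) $$ (l,j))"
    using D P j by (auto simp: scalar_prod_def atLeast0LessThan intro!: sum.cong)
  also have "\<dots> = (\<Sum>l<n. D $$ (l,l) * (P $$ (l,j))^2)"
    by (rule sum.cong) (auto simp: DP power2_eq_square)
  finally show ?thesis .
qed

lemma quad_ge:
  assumes D: "(D::real mat) \<in> carrier_mat n n" "diagonal_mat D" "\<forall>i<n. 0 \<le> D $$ (i,i)"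
    and P: "P \<in> carrier_mat n n" "\<forall>j<n. P $$ (j,j) = 1"
  shows "mat_trace D \<le> mat_trace (P\<^sup>T * (D * P))"
proof -
  have "mat_trace (P\<^sup>T * (D * P)) = (\<Sum>j<n. \<Sum>l<n. D $$ (l,l) * (P $$ (l,j))^2)"
    unfolding mat_trace_def using P(1) D(1) quad_entry[OF D(1,2) P(1)] by simp
  moreover have "mat_trace D = (\<Sum>j<n. D $$ (j,j))" unfolding mat_trace_def using D(1) by simp
  moreover have "D $$ (j,j) \<le> (\<Sum>l<n. D $$ (l,l) * (P $$ (l,j))^2)" if j: "j < n" for j
  proof -
    have "D $$ (j,j) = D $$ (j,j) * (P $$ (j,j))^2" using P(2) j by simp
    also have "\<dots> \<le> (\<Sum>l<n. D $$ (l,l) * (P $$ (l,j))^2)"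
      by (rule member_le_sum[of j "{..<n}" "\<lambda>l. D $$ (l,l) * (P $$ (l,j))^2"]) (use j D(3) in auto)
    finally show ?thesis .
  qed
  ultimately show ?thesis by (auto intro: sum_mono)
qed


lemma ell_formula:
  assumes Lc: "L \<in> carrier_mat n n" and Dc: "(D::real mat) \<in> carrier_mat n n"
    and a: "\<forall>k<n. a k \<in> carrier_vec n"
  shows "ell n (L * D * L\<^sup>T) a = mat_trace ((L\<^sup>T * Bm n a n)\<^sup>T * (D * (L\<^sup>T * Bm n a n)))"
proof -
  let ?B = "Bm n a n"
  let ?H = "L * D * L\<^sup>T"
  have S: "Sigma n a n = ?B * ?B\<^sup>T" using Sigma_Bm[of n n a] a by auto
  have Bc: "?B \<in> carrier_mat n n" by simp
  have BTc: "?B\<^sup>T \<in> carrier_mat n n" by simp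
  have LTc: "L\<^sup>T \<in> carrier_mat n n" using Lc by simp
  have LDc: "L * D \<in> carrier_mat n n" using mult_carrier_mat[OF Lc Dc] .
  have Hc: "?H \<in> carrier_mat n n" using mult_carrier_mat[OF LDc LTc] .
  have HBc: "?H * ?B \<in> carrier_mat n n" using mult_carrier_mat[OF Hc Bc] .
  have PT: "(L\<^sup>T * ?B)\<^sup>T = ?B\<^sup>T * L" using transpose_mult[OF LTc Bc] by simp
  have "ell n ?H a = mat_trace (?H * (?B * ?B\<^sup>T))" unfolding ell_def S ..
  also have "?H * (?B * ?B\<^sup>T) = (?H * ?B) * ?B\<^sup>T" using assoc_mult_mat[OF Hc Bc BTc] by simp
  also have "mat_trace \<dots> = mat_trace (?B\<^sup>T * (?H * ?B))" by (rule trace_comm[OF HBc BTc])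
  also have "?B\<^sup>T * (?H * ?B) = (L\<^sup>T * ?B)\<^sup>T * (D * (L\<^sup>T * ?B))"
    unfolding PT using Lc Dc LTc Bc BTc LDc Hc HBc
      assoc_mult_mat[OF LDc LTc Bc] assoc_mult_mat[OF Lc Dc mult_carrier_mat[OF LTc Bc]]
      assoc_mult_mat[OF BTc Lc mult_carrier_mat[OF Dc mult_carrier_mat[OF LTc Bc]]]
    by simp
  finally show ?thesis .
qed

lemma P_diag:
  assumes uut: "unit_upper_triangular L n" and a: "\<forall>k<n. a k \<in> carrier_vec n" and j: "j < n"
  shows "(L\<^sup>T * Bm n a n) $$ (j,j) = 1"
proof -
  have Lc: "L \<in> carrier_mat n n" and up: "upper_triangular L" and dg: "\<forall>i<n. L $$ (i,i) = 1"
    using uut unfolding unit_upper_triangular_def by auto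
  have st: "\<forall>i<n. \<forall>j<n. (n \<le> i \<or> i < j) \<longrightarrow> Bm n a n $$ (i,j) = 0" "\<forall>i<n. Bm n a n $$ (i,i) = 1"
    using Bm_struct[of n n a] a by auto
  have "(L\<^sup>T * Bm n a n) $$ (j,j) = (\<Sum>l<n. L $$ (l,j) * Bm n a n $$ (l,j))"
    using Lc j by (auto simp: scalar_prod_def atLeast0LessThan intro!: sum.cong)
  also have "\<dots> = (\<Sum>l<n. if l = j then 1 else 0)"
  proof (rule sum.cong)
    fix l assume l: "l \<in> {..<n}"
    show "L $$ (l,j) * Bm n a n $$ (l,j) = (if l = j then 1 else 0)"
    proof (cases "l < j")
      case True then show ?thesis using st l j by auto
    next
      case False
      show ?thesis
      proof (cases "l = j")
        case True then show ?thesis using st dg j by auto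
      next
        case False
        with \<open>\<not> l < j\<close> have "j < l" by auto
        then have "L $$ (l,j) = 0" using up l Lc by (auto intro: upper_triangularD)
        then show ?thesis using False by auto
      qed
    qed
  qed simp
  also have "\<dots> = 1" using j delta0[where n=n and i=j and x="\<lambda>_. 1"] by simp
  finally show ?thesis .
qed

theorem mainTheorem2:
  fixes n :: nat and H L D :: "real mat"
  assumes "psd_mat H n"
    and "unit_upper_triangular L n"
    and "D \<in> carrier_mat n n" and "diagonal_mat D" and "\<forall>i<n. 0 \<le> D $$ (i, i)"
    and "H = L * D * L\<^sup>T"
  shows "(\<forall>a. (\<forall>k<n. a k \<in> carrier_vec n) \<longrightarrow> ell n H (col L) \<le> ell n H a)
     \<and> ell n H (col L) = mat_trace D"
proof -
  have Lc: "L \<in> carrier_mat n n" using assms(2) unfolding unit_upper_triangular_def by auto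
  have LTc: "L\<^sup>T \<in> carrier_mat n n" using Lc by simp
  have colc: "\<forall>k<n. col L k \<in> carrier_vec n" using Lc by auto
  have "Bm n (col L) n * L\<^sup>T = mat n n (\<lambda>(i,j). if i = j \<and> i < n then 1 else 0)"
    using Bm_LT[OF assms(2), of n] by simp
  also have "\<dots> = 1\<^sub>m n" by (rule eq_matI) auto
  finally have BL: "Bm n (col L) n * L\<^sup>T = 1\<^sub>m n" .
  have LB: "L\<^sup>T * Bm n (col L) n = 1\<^sub>m n"
    by (rule mat_mult_left_right_inverse[OF Bm_carrier LTc BL])
  have eq: "ell n H (col L) = mat_trace D"
    unfolding assms(6) ell_formula[OF Lc assms(3) colc] LB using assms(3) by simp
  show ?thesis
  proof (intro conjI allI impI)
    fix a :: "nat \<Rightarrow> real vec" assume a: "\<forall>k<n. a k \<in> carrier_vec n"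
    have "mat_trace D \<le> ell n H a"
      unfolding assms(6) ell_formula[OF Lc assms(3) a]
      by (rule quad_ge[OF assms(3,4,5)]) (use P_diag[OF assms(2) a] LTc in auto)
    then show "ell n H (col L) \<le> ell n H a" using eq by simp
  qed (rule eq)
qed

end
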